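(* Let $n\geqslant 0$. The group $W_n$ acts transitively on the set of $n$-simplices of the barycentric subdivision $\operatorname{sd}\mathcal{C}^n$, and every simplex of $\operatorname{sd}\mathcal{C}^n$ is a face of an $n$-simplex.
   Context: Standing setup: $\Gamma_1$ is an arbitrary finite Coxeter diagram with a preferred vertex $s_1$ (edge $\{s,t\}$ iff $m_{st}\geqslant3$; unlabelled edge means $m_{st}=3$, no edge means $m_{st}=2$). For $n\geqslant 2$, $\Gamma_n$ is obtained from $\Gamma_{n-1}$ by adding one new vertex $s_n$ joined by an unlabelled edge to $s_{n-1}$ and to no other vertex. $\Gamma_0$ is $\Gamma_1$ with $s_1$ deleted; $\Gamma_{-1}$ is $\Gamma_1$ with $s_1$ and all its neighbours deleted. For $n\geqslant -1$, $S_n$ is the vertex set of $\Gamma_n$ and $W_n$ the Coxeter group; $W_m$ ($m\leqslant n$) is the standard parabolic subgroup of $W_n$ generated by $S_m$. Definition of $\mathcal{C}^n$ ($n\geqslant 0$): the abstract simplicial complex with vertex set $W_n/W_{n-1}$ whose $k$-simplices ($0\leqslant k\leqslant n$) are the sets $\{c(s_{n-k+1}\cdots s_n)W_{n-1},\ \ldots,\ cs_nW_{n-1},\ cW_{n-1}\}$ for $c\in W_n$. $W_n$ acts on $\mathcal{C}^n$ via its left action on $W_n/W_{n-1}$. The barycentric subdivision $\operatorname{sd}X$ of a simplicial complex $X$ has the simplices of $X$ as vertices, with simplices the chains $C_0\subset\cdots\subset C_k$; $W_n$ acts on $\operatorname{sd}\mathcal{C}^n$ by the induced action. *)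

theory Defs
  imports Main "HOL-Library.Extended_Nat"
begin

text \<open>No edge means M s t = 2.\<close>

definition coxeter_diagram :: "'a set \<Rightarrow> 'a \<Rightarrow> ('a \<Rightarrow> 'a \<Rightarrow> enat) \<Rightarrow> bool" where
  "coxeter_diagram V s1 M \<longleftrightarrow> finite V \<and> s1 \<in> V \<and> (\<forall>s\<in>V. M s s = 1)
     \<and> (\<forall>s\<in>V. \<forall>t\<in>V. M s t = M t s) \<and> (\<forall>s\<in>V. \<forall>t\<in>V. s \<noteq> t \<longrightarrow> M s t \<ge> 2)"

text \<open>Vertices of Gamma_n: Inl v for v in V (with s_1 = Inl s1), and Inr k for the
  new vertex s_k, 2 \<le> k \<le> n.\<close>

definition gen :: "'a \<Rightarrow> nat \<Rightarrow> 'a + nat" where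
  "gen s1 k = (if k = 1 then Inl s1 else Inr k)"

text \<open>Coxeter matrix of Gamma_n (for all n simultaneously): s_k -- s_(k+1) unlabelled edges,
  s_2 joined to s_1 only.\<close>

fun ext_m :: "'a \<Rightarrow> ('a \<Rightarrow> 'a \<Rightarrow> enat) \<Rightarrow> 'a + nat \<Rightarrow> 'a + nat \<Rightarrow> enat" where
  "ext_m s1 M (Inl a) (Inl b) = M a b"
| "ext_m s1 M (Inr i) (Inr j) = (if i = j then 1 else if i = j + 1 \<or> j = i + 1 then 3 else 2)"
| "ext_m s1 M (Inl a) (Inr j) = (if a = s1 \<and> j = 2 then 3 else 2)"
| "ext_m s1 M (Inr i) (Inl a) = (if a = s1 \<and> i = 2 then 3 else 2)"

definition Sgen :: "'a set \<Rightarrow> 'a \<Rightarrow> ('a \<Rightarrow> 'a \<Rightarrow> enat) \<Rightarrow> int \<Rightarrow> ('a + nat) set" where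
  "Sgen V s1 M n =
     (if n \<ge> 1 then Inl ` V \<union> Inr ` {2..nat n}
      else if n = 0 then Inl ` (V - {s1})
      else Inl ` {v \<in> V. v \<noteq> s1 \<and> \<not> (M s1 v \<ge> 3)})"

inductive cox_eq :: "'g set \<Rightarrow> ('g \<Rightarrow> 'g \<Rightarrow> enat) \<Rightarrow> 'g list \<Rightarrow> 'g list \<Rightarrow> bool"
  for S m where
  refl: "xs \<in> lists S \<Longrightarrow> cox_eq S m xs xs"
| sym: "cox_eq S m xs ys \<Longrightarrow> cox_eq S m ys xs"
| trans: "cox_eq S m xs ys \<Longrightarrow> cox_eq S m ys zs \<Longrightarrow> cox_eq S m xs zs"
| sq: "s \<in> S \<Longrightarrow> u \<in> lists S \<Longrightarrow> v \<in> lists S \<Longrightarrow> cox_eq S m (u @ [s, s] @ v) (u @ v)"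
| braid: "s \<in> S \<Longrightarrow> t \<in> S \<Longrightarrow> s \<noteq> t \<Longrightarrow> m s t = enat k \<Longrightarrow> u \<in> lists S \<Longrightarrow> v \<in> lists S
     \<Longrightarrow> cox_eq S m (u @ concat (replicate k [s, t]) @ v) (u @ v)"

text \<open>The element of W_n represented by a word w over S_n (an equivalence class of words).\<close>

definition cls :: "'a set \<Rightarrow> 'a \<Rightarrow> ('a \<Rightarrow> 'a \<Rightarrow> enat) \<Rightarrow> nat \<Rightarrow> ('a + nat) list \<Rightarrow> ('a + nat) list set" where
  "cls V s1 M n w = {v. cox_eq (Sgen V s1 M (int n)) (ext_m s1 M) w v}"

definition coset :: "'a set \<Rightarrow> 'a \<Rightarrow> ('a \<Rightarrow> 'a \<Rightarrow> enat) \<Rightarrow> nat \<Rightarrow> ('a + nat) list \<Rightarrow> ('a + nat) list set set" where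
  "coset V s1 M n c = {cls V s1 M n (c @ w) | w. w \<in> lists (Sgen V s1 M (int n - 1))}"

text \<open>The k-simplex {c(s_(n-k+1)...s_n)W_(n-1), ..., c s_n W_(n-1), c W_(n-1)} of C^n.\<close>

definition csimplex :: "'a set \<Rightarrow> 'a \<Rightarrow> ('a \<Rightarrow> 'a \<Rightarrow> enat) \<Rightarrow> nat \<Rightarrow> ('a + nat) list \<Rightarrow> nat
    \<Rightarrow> ('a + nat) list set set set" where
  "csimplex V s1 M n c k =
     {coset V s1 M n (c @ map (gen s1) [i..<n+1]) | i. n - k + 1 \<le> i \<and> i \<le> n + 1}"

definition Cn :: "'a set \<Rightarrow> 'a \<Rightarrow> ('a \<Rightarrow> 'a \<Rightarrow> enat) \<Rightarrow> nat \<Rightarrow> ('a + nat) list set set set set" where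
  "Cn V s1 M n = {csimplex V s1 M n c k | c k. c \<in> lists (Sgen V s1 M (int n)) \<and> k \<le> n}"

text \<open>Barycentric subdivision: simplices are the nonempty finite chains of simplices.
  A chain C_0 \<subset> ... \<subset> C_k is a k-simplex, i.e. has k+1 elements.\<close>

definition sd :: "'v set set \<Rightarrow> 'v set set set" where
  "sd K = {F. F \<noteq> {} \<and> finite F \<and> F \<subseteq> K \<and> (\<forall>A\<in>F. \<forall>B\<in>F. A \<subseteq> B \<or> B \<subseteq> A)}"

definition act_vert :: "'a set \<Rightarrow> 'a \<Rightarrow> ('a \<Rightarrow> 'a \<Rightarrow> enat) \<Rightarrow> nat \<Rightarrow> ('a + nat) list
    \<Rightarrow> ('a + nat) list set set \<Rightarrow> ('a + nat) list set set" where
  "act_vert V s1 M n g X =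
     {cls V s1 M n (g @ w) | w. w \<in> lists (Sgen V s1 M (int n)) \<and> cls V s1 M n w \<in> X}"

definition act_sd :: "'a set \<Rightarrow> 'a \<Rightarrow> ('a \<Rightarrow> 'a \<Rightarrow> enat) \<Rightarrow> nat \<Rightarrow> ('a + nat) list
    \<Rightarrow> ('a + nat) list set set set set \<Rightarrow> ('a + nat) list set set set set" where
  "act_sd V s1 M n g F = (\<lambda>C. act_vert V s1 M n g ` C) ` F"

end

theory Submission
  imports Defs Complex_Main "HOL-Combinatorics.Permutations"
begin



lemma set_rep2: "set (concat (replicate k [s,t])) \<subseteq> {s,t}"
  by (induction k) auto

lemma cox_eq_lists: "cox_eq S m x y \<Longrightarrow> x \<in> lists S \<and> y \<in> lists S"
proof (induction rule: cox_eq.induct)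
  case (braid s t k u v)
  have "set (concat (replicate k [s,t])) \<subseteq> S" using set_rep2[of k s t] braid by blast
  then have "concat (replicate k [s,t]) \<in> lists S" by (simp only: lists_eq_set mem_Collect_eq)
  then show ?case using braid by simp
qed simp_all

lemma cox_eq_ctx: "cox_eq S m x y \<Longrightarrow> u \<in> lists S \<Longrightarrow> w \<in> lists S \<Longrightarrow> cox_eq S m (u@x@w) (u@y@w)"
proof (induction arbitrary: u w rule: cox_eq.induct)
  case (refl xs) then show ?case by (intro cox_eq.refl) auto
next
  case (sym xs ys) then show ?case by (auto intro: cox_eq.sym)
next
  case (trans xs ys zs) then show ?case by (meson cox_eq.trans)
next
  case (sq s u' v')
  have "cox_eq S m ((u@u') @ [s,s] @ (v'@w)) ((u@u') @ (v'@w))"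
    by (rule cox_eq.sq) (use sq in auto)
  then show ?case by simp
next
  case (braid s t k u' v')
  have "cox_eq S m ((u@u') @ concat (replicate k [s,t]) @ (v'@w)) ((u@u') @ (v'@w))"
    by (rule cox_eq.braid) (use braid in simp_all)
  then show ?case by simp
qed

lemma cox_eq_left: "cox_eq S m x y \<Longrightarrow> u \<in> lists S \<Longrightarrow> cox_eq S m (u@x) (u@y)"
  using cox_eq_ctx[of S m x y u "[]"] by simp

lemma cox_eq_right: "cox_eq S m x y \<Longrightarrow> w \<in> lists S \<Longrightarrow> cox_eq S m (x@w) (y@w)"
  using cox_eq_ctx[of S m x y "[]" w] by simp

lemma cox_eq_app: "cox_eq S m x y \<Longrightarrow> cox_eq S m x' y' \<Longrightarrow> cox_eq S m (x@x') (y@y')"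
  by (meson cox_eq.trans cox_eq_left cox_eq_lists cox_eq_right)

lemma cox_sq: "s \<in> S \<Longrightarrow> cox_eq S m [s,s] []"
  using cox_eq.sq[of s S "[]" "[]" m] by simp

lemma cox_braid: "s \<in> S \<Longrightarrow> t \<in> S \<Longrightarrow> s \<noteq> t \<Longrightarrow> m s t = enat k \<Longrightarrow> cox_eq S m (concat (replicate k [s,t])) []"
  using cox_eq.braid[of s S t m k "[]" "[]"] by simp

lemma cox_inv: "w \<in> lists S \<Longrightarrow> cox_eq S m (rev w @ w) [] \<and> cox_eq S m (w @ rev w) []"
proof (induction w)
  case Nil then show ?case by (auto intro: cox_eq.refl)
next
  case (Cons a w)
  have a: "a \<in> S" and w: "w \<in> lists S" using Cons by auto
  have 1: "cox_eq S m (rev w @ [a,a] @ w) (rev w @ w)"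
    by (rule cox_eq.sq) (use a w in auto)
  have 2: "cox_eq S m ([a] @ (w @ rev w) @ [a]) ([a] @ [] @ [a])"
    by (rule cox_eq_ctx) (use Cons a in auto)
  then have 2: "cox_eq S m ([a] @ (w @ rev w) @ [a]) [a,a]" by simp
  have 3: "cox_eq S m ([a] @ (w @ rev w) @ [a]) []"
    using cox_eq.trans[OF 2 cox_sq[OF a]] by simp
  have IH: "cox_eq S m (rev w @ w) []" "cox_eq S m (w @ rev w) []" using Cons.IH w by auto
  have 4: "cox_eq S m (rev (a#w) @ (a#w)) []" using cox_eq.trans[OF 1 IH(1)] by simp
  have 5: "cox_eq S m ((a#w) @ rev (a#w)) []" using 3 by simp
  show ?case using 4 5 by (rule conjI)
qed

lemma cox_comm: assumes "s \<in> S" "t \<in> S" "s \<noteq> t" "m s t = 2"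
  shows "cox_eq S m [s,t] [t,s]"
proof -
  have b: "cox_eq S m [s,t,s,t] []"
  proof -
    have e: "m s t = enat 2" using assms(4) by (simp add: enat_numeral)
    have "concat (replicate 2 [s,t]) = [s,t,s,t]" by (simp add: numeral_2_eq_2)
    then show ?thesis using cox_braid[where m=m, OF assms(1-3) e] by simp
  qed
  have 1: "cox_eq S m ([s] @ [s,t,s,t] @ [t]) ([s] @ [] @ [t])"
    by (rule cox_eq_ctx[OF b]) (use assms in auto)
  have 2: "cox_eq S m ([] @ [s,s] @ [t,s,t,t]) ([] @ [t,s,t,t])"
    by (rule cox_eq.sq) (use assms in auto)
  have 3: "cox_eq S m ([t,s] @ [t,t] @ []) ([t,s] @ [])"
    by (rule cox_eq.sq) (use assms in auto)
  show ?thesis using cox_eq.trans[OF cox_eq.trans[OF cox_eq.sym[OF 1[simplified]] 2[simplified]] 3[simplified]]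
    by simp
qed

lemma cox_br3: assumes "s \<in> S" "t \<in> S" "s \<noteq> t" "m s t = 3"
  shows "cox_eq S m [s,t,s] [t,s,t]"
proof -
  have b: "cox_eq S m [s,t,s,t,s,t] []"
  proof -
    have e: "m s t = enat 3" using assms(4) by (simp add: enat_numeral)
    have "concat (replicate 3 [s,t]) = [s,t,s,t,s,t]" by (simp add: numeral_3_eq_3)
    then show ?thesis using cox_braid[where m=m, OF assms(1-3) e] by simp
  qed
  have yy: "cox_eq S m [t,s,t,t,s,t] []"
  proof -
    have 1: "cox_eq S m ([t,s] @ [t,t] @ [s,t]) ([t,s] @ [s,t])"
      by (rule cox_eq.sq) (use assms in auto)
    have 2: "cox_eq S m ([t] @ [s,s] @ [t]) ([t] @ [t])"
      by (rule cox_eq.sq) (use assms in auto)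
    show ?thesis using cox_eq.trans[OF 1[simplified] cox_eq.trans[OF 2[simplified] cox_sq[OF assms(2), of m]]] by simp
  qed
  have 1: "cox_eq S m ([s,t,s] @ [t,s,t,t,s,t] @ []) ([s,t,s] @ [] @ [])"
    by (rule cox_eq_ctx[OF yy]) (use assms in auto)
  have 2: "cox_eq S m ([] @ [s,t,s,t,s,t] @ [t,s,t]) ([] @ [] @ [t,s,t])"
    by (rule cox_eq_ctx[OF b]) (use assms in auto)
  show ?thesis using cox_eq.trans[OF cox_eq.sym[OF 1[simplified]] 2[simplified]] by simp
qed

lemma cox_comm_list: assumes "a \<in> S" "ws \<in> lists S" "\<forall>b\<in>set ws. b \<noteq> a \<and> m a b = 2"
  shows "cox_eq S m (a # ws) (ws @ [a])"
  using assms(2,3)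
proof (induction ws)
  case Nil then show ?case using assms(1) by (auto intro: cox_eq.refl)
next
  case (Cons b ws)
  have 1: "cox_eq S m ([] @ [a,b] @ ws) ([] @ [b,a] @ ws)"
    by (rule cox_eq_ctx[OF cox_comm]) (use Cons assms(1) in auto)
  have 2: "cox_eq S m ([b] @ (a#ws)) ([b] @ (ws @ [a]))"
    by (rule cox_eq_left) (use Cons in auto)
  show ?case using cox_eq.trans[OF 1[simplified] 2[simplified]] by simp
qed




lemma sin_rec: "sin (a + p) = 2 * cos p * sin a - sin (a - (p::real))"
  by (simp add: sin_add sin_diff)

lemma cheb:
  fixes x :: "nat \<Rightarrow> real"
  assumes rec: "\<And>j. x (j+2) = 2 * cos p * x (j+1) - x j"
  shows "sin p * x j = sin (real j * p) * x 1 - sin ((real j - 1) * p) * x 0"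
proof -
  have "sin p * x j = sin (real j * p) * x 1 - sin ((real j - 1) * p) * x 0 \<and>
        sin p * x (Suc j) = sin (real (Suc j) * p) * x 1 - sin ((real (Suc j) - 1) * p) * x 0"
  proof (induction j)
    case 0 then show ?case by simp
  next
    case (Suc j)
    have e1: "sin (real (Suc (Suc j)) * p) = 2 * cos p * sin (real (Suc j) * p) - sin (real j * p)"
      using sin_rec[of "real (Suc j) * p" p] by (simp add: algebra_simps)
    have e2: "sin ((real (Suc (Suc j)) - 1) * p) = 2 * cos p * sin ((real (Suc j) - 1) * p) - sin ((real j - 1) * p)"
      using sin_rec[of "(real (Suc j) - 1) * p" p] by (simp add: algebra_simps)
    have r: "x (Suc (Suc j)) = 2 * cos p * x (Suc j) - x j" using rec[of j] by simp
    have "sin p * x (Suc (Suc j)) = 2 * cos p * (sin p * x (Suc j)) - sin p * x j"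
      by (subst r) (simp add: algebra_simps)
    also have "\<dots> = 2 * cos p * (sin (real (Suc j) * p) * x 1 - sin ((real (Suc j) - 1) * p) * x 0)
        - (sin (real j * p) * x 1 - sin ((real j - 1) * p) * x 0)"
      using Suc.IH by simp
    also have "\<dots> = sin (real (Suc (Suc j)) * p) * x 1 - sin ((real (Suc (Suc j)) - 1) * p) * x 0"
      unfolding e1 e2 by (simp add: algebra_simps)
    finally show ?case using Suc.IH by simp
  qed
  then show ?thesis by blast
qed

lemma cheb_period:
  fixes x :: "nat \<Rightarrow> real" and k :: nat
  assumes k: "k \<ge> 3" and rec: "\<And>j. x (j+2) = 2 * cos (2*pi/k) * x (j+1) - x j"
  shows "x k = x 0"
proof -
  define p where "p = 2*pi/k"
  have kp: "real k * p = 2*pi" using k by (simp add: p_def)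
  have "sin p * x k = sin (real k * p) * x 1 - sin ((real k - 1) * p) * x 0"
    by (rule cheb) (use rec in \<open>simp add: p_def\<close>)
  also have "sin (real k * p) = 0" using kp by simp
  also have "sin ((real k - 1) * p) = - sin p"
  proof -
    have "(real k - 1) * p = 2*pi - p" using kp by (simp add: algebra_simps)
    then show ?thesis by (simp add: sin_diff)
  qed
  finally have 1: "sin p * x k = sin p * x 0" by simp
  have "0 < p" using k by (simp add: p_def)
  moreover have "p < pi" using k by (simp add: p_def field_simps)
  ultimately have "sin p > 0" by (rule sin_gt_zero)
  with 1 show ?thesis by simp
qed

definition bf :: "'g set \<Rightarrow> ('g \<Rightarrow> 'g \<Rightarrow> real) \<Rightarrow> 'g \<Rightarrow> ('g \<Rightarrow> real) \<Rightarrow> real" where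
  "bf S B s v = (\<Sum>u\<in>S. B s u * v u)"

definition rfl :: "'g set \<Rightarrow> ('g \<Rightarrow> 'g \<Rightarrow> real) \<Rightarrow> 'g \<Rightarrow> ('g \<Rightarrow> real) \<Rightarrow> ('g \<Rightarrow> real)" where
  "rfl S B s v = (\<lambda>u. v u - (if u = s then 2 * bf S B s v else 0))"

definition rho :: "'g set \<Rightarrow> ('g \<Rightarrow> 'g \<Rightarrow> real) \<Rightarrow> 'g list \<Rightarrow> ('g \<Rightarrow> real) \<Rightarrow> ('g \<Rightarrow> real)" where
  "rho S B w v = foldr (rfl S B) w v"

lemma rho_append: "rho S B (a @ b) v = rho S B a (rho S B b v)"
  by (simp add: rho_def)

lemma rho_Cons: "rho S B (g # w) v = rfl S B g (rho S B w v)"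
  by (simp add: rho_def)

lemma bf_add: assumes "finite S" "s \<in> S"
  shows "bf S B r (\<lambda>u. v u + (if u = s then x else 0)) = bf S B r v + B r s * x"
proof -
  have "bf S B r (\<lambda>u. v u + (if u = s then x else 0)) = (\<Sum>u\<in>S. B r u * v u + (if u = s then B r u * x else 0))"
    unfolding bf_def by (rule sum.cong) (auto simp: algebra_simps)
  also have "\<dots> = bf S B r v + B r s * x"
    using assms by (simp add: sum.distrib bf_def)
  finally show ?thesis .
qed

lemma rfl_invol: assumes "finite S" "s \<in> S" "B s s = 1"
  shows "rfl S B s (rfl S B s v) = v"
proof -
  have e: "rfl S B s v = (\<lambda>u. v u + (if u = s then - 2 * bf S B s v else 0))"
    by (auto simp: rfl_def)
  have "bf S B s (rfl S B s v) = - bf S B s v"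
    unfolding e using bf_add[OF assms(1,2)] assms(3) by simp
  then show ?thesis by (auto simp: rfl_def e)
qed

lemma dihedral:
  assumes S: "finite S" "s \<in> S" "t \<in> S" "s \<noteq> t"
    and Bss: "B s s = 1" and Btt: "B t t = 1"
    and k: "k \<ge> 2" and Bst: "B s t = - cos (pi / k)" and Bts: "B t s = - cos (pi / k)"
  shows "((rfl S B s \<circ> rfl S B t) ^^ k) v = v"
proof -
  define c where "c = cos (pi / k)"
  define p where "p = bf S B s v"
  define q where "q = bf S B t v"
  define W where "W = (\<lambda>(x::real, y::real). (\<lambda>u. v u + (if u = s then x else 0) + (if u = t then y else 0)))"
  define st where "st = (\<lambda>(x::real, y::real). let y1 = - y + 2*c*x - 2*q in (- x + 2*c*y1 - 2*p, y1))"
  have bfW: "bf S B r (W (x,y)) = bf S B r v + B r s * x + B r t * y" for r x y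
  proof -
    have "W (x,y) = (\<lambda>u. (\<lambda>u. v u + (if u = s then x else 0)) u + (if u = t then y else 0))"
      by (simp add: W_def)
    then show ?thesis using bf_add[OF S(1) S(3), of B r "\<lambda>u. v u + (if u = s then x else 0)" y]
      bf_add[OF S(1) S(2), of B r v x] by simp
  qed
  have step: "(rfl S B s \<circ> rfl S B t) (W (x,y)) = W (st (x,y))" for x y
  proof -
    define y1 where "y1 = - y + 2*c*x - 2*q"
    have 1: "rfl S B t (W (x,y)) = W (x, y1)"
      using S(4) unfolding rfl_def bfW y1_def
      by (auto simp: W_def Bts Btt c_def q_def fun_eq_iff algebra_simps)
    have 2: "rfl S B s (W (x,y1)) = W (- x + 2*c*y1 - 2*p, y1)"
      using S(4) unfolding rfl_def bfW
      by (auto simp: W_def Bss Bst c_def p_def fun_eq_iff algebra_simps)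
    show ?thesis using 1 2 by (simp add: st_def y1_def Let_def)
  qed
  have iter: "((rfl S B s \<circ> rfl S B t) ^^ j) v = W ((st ^^ j) (0,0))" for j
  proof (induction j)
    case 0 then show ?case by (simp add: W_def)
  next
    case (Suc j)
    obtain x y where xy: "(st ^^ j) (0,0) = (x,y)" by fastforce
    show ?case using Suc step[of x y] xy by simp
  qed
  have c0: "0 \<le> c" "c < 1"
  proof -
    have "0 < pi / k" "pi / k \<le> pi / 2" using k by (auto simp: field_simps)
    then show "0 \<le> c" unfolding c_def by (intro cos_ge_zero) auto
    have "0 < pi / k" "pi / k < pi" using k by (auto simp: field_simps)
    then have "sin (pi / k) > 0" by (rule sin_gt_zero)
    then have "sin (pi/k) * sin (pi/k) > 0" by simp
    then have "cos (pi/k)^2 < 1" using sin_cos_squared_add[of "pi/k"] by (simp add: power2_eq_square)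
    then show "c < 1" unfolding c_def by (smt (verit) power2_eq_square mult_le_cancel_left1)
  qed
  define D where "D = 1 - c^2"
  have D: "D > 0" using c0 by (simp add: D_def power2_eq_square) (smt (verit) mult_less_cancel_right1)
  define xs where "xs = - (p + c*q) / D"
  define ys where "ys = - (q + c*p) / D"
  have fx: "p + xs - c * ys = 0" using D unfolding xs_def ys_def D_def by (simp add: field_simps power2_eq_square)
  have fy: "q - c * xs + ys = 0" using D unfolding xs_def ys_def D_def by (simp add: field_simps power2_eq_square)
  define X where "X j = fst ((st ^^ j) (0,0)) - xs" for j
  define Y where "Y j = snd ((st ^^ j) (0,0)) - ys" for j
  have recY: "Y (Suc j) = 2*c*X j - Y j" for j
  proof -
    obtain x y where xy: "(st ^^ j) (0,0) = (x,y)" by fastforce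
    have qq: "q = c*xs - ys" using fy by simp
    show ?thesis using xy by (simp add: X_def Y_def st_def Let_def qq algebra_simps)
  qed
  have recX: "X (Suc j) = (4*c^2-1)*X j - 2*c*Y j" for j
  proof -
    obtain x y where xy: "(st ^^ j) (0,0) = (x,y)" by fastforce
    have pp: "p = c*ys - xs" and qq: "q = c*xs - ys" using fx fy by simp_all
    show ?thesis using xy by (simp add: X_def Y_def st_def Let_def pp qq algebra_simps power2_eq_square)
  qed
  have rX: "X (j+2) = (4*c^2-2) * X (j+1) - X j" for j
    using recX[of "Suc j"] recY[of j] recX[of j] by (simp only: Suc_eq_plus1[symmetric] add_2_eq_Suc') (simp add: algebra_simps power2_eq_square)
  have rY: "Y (j+2) = (4*c^2-2) * Y (j+1) - Y j" for j
    using recY[of "Suc j"] recY[of j] recX[of j] by (simp only: Suc_eq_plus1[symmetric] add_2_eq_Suc') (simp add: algebra_simps power2_eq_square)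
  have Xk: "X k = X 0 \<and> Y k = Y 0"
  proof (cases "k = 2")
    case True
    then have "c = 0" by (simp add: c_def)
    then show ?thesis using True recX recY by (simp add: numeral_2_eq_2)
  next
    case False
    then have k3: "k \<ge> 3" using k by simp
    have cc: "2 * cos (2*pi/k) = 4*c^2-2"
    proof -
      have "2*pi/k = 2 * (pi/k)" by simp
      then have "cos (2*pi/k) = 2 * c^2 - 1" using cos_double_cos[of "pi/k"] by (simp add: c_def)
      then show ?thesis by simp
    qed
    show ?thesis using cheb_period[OF k3, of X] cheb_period[OF k3, of Y] rX rY
      unfolding cc by simp
  qed
  have "(st ^^ k) (0,0) = (0,0)"
    using Xk by (simp add: X_def Y_def prod_eq_iff)
  then show ?thesis using iter[of k] by (simp add: W_def)
qed




lemma rho_rep: "rho S B (concat (replicate k [s,t])) v = ((rfl S B s \<circ> rfl S B t) ^^ k) v"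
  by (induction k arbitrary: v) (simp_all add: rho_def)

lemma rho_cox:
  assumes fin: "finite S" and diag: "\<And>s. s \<in> S \<Longrightarrow> B s s = 1"
    and off: "\<And>s t k. s \<in> S \<Longrightarrow> t \<in> S \<Longrightarrow> s \<noteq> t \<Longrightarrow> m s t = enat k \<Longrightarrow>
               k \<ge> 2 \<and> B s t = - cos (pi / k) \<and> B t s = - cos (pi / k)"
    and eq: "cox_eq S m x y"
  shows "rho S B x = rho S B y"
  using eq
proof (induction rule: cox_eq.induct)
  case (sq s u v)
  have "rho S B (u @ [s, s] @ v) z = rho S B (u @ v) z" for z
    using rfl_invol[where B=B, OF fin sq(1) diag[OF sq(1)]] by (simp add: rho_append rho_Cons rho_def)
  then show ?case by auto
next
  case (braid s t k u v)
  have "rho S B (u @ concat (replicate k [s, t]) @ v) z = rho S B (u @ v) z" for z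
    using dihedral[where B=B, OF fin braid(1,2,3) diag[OF braid(1)] diag[OF braid(2)]] off[OF braid(1-4)]
    by (simp add: rho_append rho_rep)
  then show ?case by auto
qed auto

lemma rho_fix: "\<forall>g\<in>set w. g \<noteq> x \<Longrightarrow> rho S B w v x = v x"
  by (induction w) (auto simp: rho_def rfl_def)




locale cox =
  fixes V :: "'a set" and s1 :: 'a and M :: "'a \<Rightarrow> 'a \<Rightarrow> enat" and n :: nat
  assumes diag: "coxeter_diagram V s1 M"
begin

abbreviation "SS \<equiv> Sgen V s1 M (int n)"
abbreviation "SP \<equiv> Sgen V s1 M (int n - 1)"
abbreviation "mm \<equiv> ext_m s1 M"
abbreviation "EQ \<equiv> cox_eq SS mm"
abbreviation "g \<equiv> gen s1"

lemma finV: "finite V" and s1V: "s1 \<in> V"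
  using diag by (auto simp: coxeter_diagram_def)

lemma finite_SS: "finite SS"
  using finV by (auto simp: Sgen_def)

lemma SS_cases: "x \<in> SS \<Longrightarrow> (\<exists>a\<in>V. x = Inl a) \<or> (\<exists>i. 2 \<le> i \<and> i \<le> n \<and> x = Inr i)"
  by (auto simp: Sgen_def split: if_splits)

lemma SP_sub: "SP \<subseteq> SS"
proof (cases "n \<ge> 2")
  case True then show ?thesis by (auto simp: Sgen_def)
next
  case False
  then have "n = 0 \<or> n = 1" by auto
  then show ?thesis by (auto simp: Sgen_def)
qed

lemma lists_SP_SS: "u \<in> lists SP \<Longrightarrow> u \<in> lists SS"
  using SP_sub by auto

lemma gen_SS: "1 \<le> i \<Longrightarrow> i \<le> n \<Longrightarrow> g i \<in> SS"
  using s1V by (auto simp: Sgen_def gen_def)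

lemma gen_SP: "1 \<le> i \<Longrightarrow> i < n \<Longrightarrow> g i \<in> SP"
  using s1V by (auto simp: Sgen_def gen_def)

lemma gen_notSP: "1 \<le> n \<Longrightarrow> g n \<notin> SP"
  by (auto simp: Sgen_def gen_def)

lemma gen_inj: "1 \<le> i \<Longrightarrow> 1 \<le> j \<Longrightarrow> g i = g j \<Longrightarrow> i = j"
  by (auto simp: gen_def split: if_splits)

lemma mm_gen: "1 \<le> i \<Longrightarrow> 1 \<le> j \<Longrightarrow> i \<noteq> j \<Longrightarrow>
   mm (g i) (g j) = (if i = j + 1 \<or> j = i + 1 then 3 else 2)"
  by (auto simp: gen_def)

lemma mm_sym: "x \<in> SS \<Longrightarrow> y \<in> SS \<Longrightarrow> mm x y = mm y x"
  using diag SS_cases[of x] SS_cases[of y] by (auto simp: coxeter_diagram_def)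

lemma mm_ge2: "x \<in> SS \<Longrightarrow> y \<in> SS \<Longrightarrow> x \<noteq> y \<Longrightarrow> mm x y = enat k \<Longrightarrow> k \<ge> 2"
proof -
  assume a: "x \<in> SS" "y \<in> SS" "x \<noteq> y" "mm x y = enat k"
  have "mm x y \<ge> 2"
  proof -
    from SS_cases[OF a(1)] SS_cases[OF a(2)] a(3) show ?thesis
    proof (elim disjE bexE exE conjE)
      fix a b assume "a \<in> V" "x = Inl a" "b \<in> V" "y = Inl b"
      then show ?thesis using diag a(3) by (auto simp: coxeter_diagram_def)
    next
      fix i j assume "x = Inr i" "y = Inr j"
      then show ?thesis using a(3) by auto
    qed (auto)
  qed
  then show ?thesis using a(4) by (simp add: enat_numeral[symmetric])
qed

definition Bm :: "'a + nat \<Rightarrow> 'a + nat \<Rightarrow> real" where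
  "Bm x y = (if x = y then 1 else case mm x y of enat k \<Rightarrow> - cos (pi / real k) | \<infinity> \<Rightarrow> 0)"

lemma rho_EQ: "EQ x y \<Longrightarrow> rho SS Bm x = rho SS Bm y"
  by (rule rho_cox[OF finite_SS]) (auto simp: Bm_def mm_ge2 mm_sym)

lemma not_sn_SP: assumes "1 \<le> n" "w \<in> lists SP" shows "\<not> EQ [g n] w"
proof
  assume e: "EQ [g n] w"
  define v where "v = (\<lambda>u. if u = g n then (1::real) else 0)"
  have gS: "g n \<in> SS" using gen_SS assms by simp
  have "rho SS Bm w v (g n) = 1"
    using assms gen_notSP rho_fix[of w "g n" SS Bm v] by (auto simp: v_def)
  moreover have "rho SS Bm [g n] v (g n) = -1"
  proof -
    have "bf SS Bm (g n) v = 1"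
      unfolding bf_def v_def using gS finite_SS by (simp add: Bm_def if_distrib cong: if_cong)
    then show ?thesis by (simp add: rho_def rfl_def v_def)
  qed
  ultimately show False using rho_EQ[OF e] by simp
qed

abbreviation "cs \<equiv> coset V s1 M n"
abbreviation "cl \<equiv> cls V s1 M n"

lemma cls_eq: "EQ a b \<Longrightarrow> cl a = cl b"
  unfolding cls_def by (auto intro: cox_eq.trans cox_eq.sym)

lemma cls_mem: "cl a = cl b \<Longrightarrow> a \<in> lists SS \<Longrightarrow> EQ b a"
  unfolding cls_def by (metis (mono_tags) cox_eq.refl mem_Collect_eq)

lemma coset_eqI: assumes "EQ x (y @ u)" "u \<in> lists SP" shows "cs x = cs y"
proof -
  have uS: "u \<in> lists SS" using assms(2) lists_SP_SS by blast
  have xy: "x \<in> lists SS" "y \<in> lists SS" using cox_eq_lists[OF assms(1)] by auto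
  show ?thesis
  proof
    show "cs x \<subseteq> cs y"
    proof
      fix z assume "z \<in> cs x"
      then obtain w where w: "w \<in> lists SP" "z = cl (x @ w)" by (auto simp: coset_def)
      have "EQ (x @ w) ((y @ u) @ w)" using cox_eq_right[OF assms(1)] w lists_SP_SS by blast
      then have "z = cl (y @ (u @ w))" using w cls_eq by simp
      moreover have "u @ w \<in> lists SP" using w assms(2) by simp
      ultimately show "z \<in> cs y" unfolding coset_def by blast
    qed
  next
    show "cs y \<subseteq> cs x"
    proof
      fix z assume "z \<in> cs y"
      then obtain w where w: "w \<in> lists SP" "z = cl (y @ w)" by (auto simp: coset_def)
      have wS: "w \<in> lists SS" using w lists_SP_SS by blast
      have "EQ (y @ (u @ rev u) @ w) (y @ [] @ w)"
        by (rule cox_eq_ctx) (use cox_inv[OF uS] xy wS in auto)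
      moreover have "EQ ((y @ u) @ (rev u @ w)) (x @ (rev u @ w))"
        by (rule cox_eq_right[OF cox_eq.sym[OF assms(1)]]) (use uS wS in auto)
      ultimately have "EQ (y @ w) (x @ (rev u @ w))"
        by (metis append_assoc append_Nil cox_eq.sym cox_eq.trans)
      then have "z = cl (x @ (rev u @ w))" using w cls_eq by simp
      moreover have "rev u @ w \<in> lists SP" using w assms(2) by (simp add: lists_eq_set)
      ultimately show "z \<in> cs x" unfolding coset_def by blast
    qed
  qed
qed

lemma coset_EQ: "EQ x y \<Longrightarrow> cs x = cs y"
  using coset_eqI[of x y "[]"] by simp

lemma act_vert_coset: assumes "h \<in> lists SS" "c \<in> lists SS"
  shows "act_vert V s1 M n h (cs c) = cs (h @ c)"
proof
  show "act_vert V s1 M n h (cs c) \<subseteq> cs (h @ c)"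
  proof
    fix z assume "z \<in> act_vert V s1 M n h (cs c)"
    then obtain w u where w: "w \<in> lists SS" "z = cl (h @ w)" "u \<in> lists SP" "cl w = cl (c @ u)"
      by (auto simp: act_vert_def coset_def)
    have "EQ (c @ u) w" using cls_mem[OF w(4) w(1)] .
    then have "EQ (h @ w) (h @ (c @ u))" using cox_eq_left[OF cox_eq.sym] assms(1) by blast
    then have "z = cl ((h @ c) @ u)" using w cls_eq by simp
    then show "z \<in> cs (h @ c)" using w(3) unfolding coset_def by blast
  qed
next
  show "cs (h @ c) \<subseteq> act_vert V s1 M n h (cs c)"
  proof
    fix z assume "z \<in> cs (h @ c)"
    then obtain u where u: "u \<in> lists SP" "z = cl ((h @ c) @ u)" by (auto simp: coset_def)
    have "c @ u \<in> lists SS" using u assms lists_SP_SS by auto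
    moreover have "cl (c @ u) \<in> cs c" using u by (auto simp: coset_def)
    ultimately show "z \<in> act_vert V s1 M n h (cs c)" using u unfolding act_vert_def by force
  qed
qed

end



definition tau :: "nat \<Rightarrow> nat \<Rightarrow> nat" where
  "tau j i = (if i = j then j + 1 else if i = j + 1 then j else i)"

lemma upt_split: "i \<le> m \<Longrightarrow> m \<le> k \<Longrightarrow> [i..<k] = [i..<m] @ [m..<k]"
  by (metis le_add_diff_inverse upt_add_eq_append)

context cox
begin

definition tw :: "nat \<Rightarrow> ('a + nat) list" where
  "tw i = map g [i..<n+1]"

lemma tw_SS: "1 \<le> i \<Longrightarrow> tw i \<in> lists SS"
  by (auto simp: tw_def intro!: gen_SS)

lemma tw_Cons: "i \<le> n \<Longrightarrow> tw i = g i # tw (i+1)"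
  by (simp add: tw_def upt_conv_Cons del: upt_Suc)

lemma K: assumes j: "1 \<le> j" "j \<le> n" and i: "1 \<le> i" "i \<le> n + 1"
  shows "\<exists>u\<in>lists SP. EQ (g j # tw i) (tw (tau j i) @ u)"
proof -
  have gj: "g j \<in> SS" using gen_SS j by simp
  consider "i = j + 1" | "i = j" | "j + 1 < i" | "i < j" by linarith
  then show ?thesis
  proof cases
    case 1
    then have "g j # tw i = tw (tau j i)" using j by (simp add: tau_def tw_Cons)
    moreover have "EQ (tw (tau j i)) (tw (tau j i))" using tw_SS[of j] j 1 by (auto simp: tau_def intro!: cox_eq.refl)
    ultimately show ?thesis by (intro bexI[of _ "[]"]) auto
  next
    case 2
    have "EQ ([] @ [g j, g j] @ tw (j+1)) ([] @ tw (j+1))"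
      by (rule cox_eq.sq) (use gj tw_SS in auto)
    then show ?thesis using 2 j by (intro bexI[of _ "[]"]) (auto simp: tau_def tw_Cons)
  next
    case 3
    have "EQ (g j # tw i) (tw i @ [g j])"
    proof (rule cox_comm_list[OF gj tw_SS[OF i(1)]])
      show "\<forall>b\<in>set (tw i). b \<noteq> g j \<and> mm (g j) b = 2"
      proof
        fix b assume "b \<in> set (tw i)"
        then obtain l where l: "b = g l" "i \<le> l" "l \<le> n" by (auto simp: tw_def)
        then show "b \<noteq> g j \<and> mm (g j) b = 2"
          using 3 j mm_gen[of j l] gen_inj[of l j] i by auto
      qed
    qed
    moreover have "[g j] \<in> lists SP" using gen_SP[of j] j 3 i by auto
    ultimately show ?thesis using 3 by (intro bexI[of _ "[g j]"]) (auto simp: tau_def)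
  next
    case 4
    define pre where "pre = map g [i..<j-1]"
    define post where "post = tw (j+1)"
    have gj1: "g (j-1) \<in> SS" using gen_SS j 4 i by simp
    have preS: "pre \<in> lists SS" using j i by (auto simp: pre_def intro!: gen_SS, arith)
    have postS: "post \<in> lists SS" by (simp add: post_def tw_SS)
    have split: "tw i = pre @ [g (j-1), g j] @ post"
    proof -
      have "[i..<n+1] = [i..<j-1] @ [j-1..<n+1]" using 4 j by (intro upt_split) auto
      moreover have "[j-1..<n+1] = (j-1) # j # [j+1..<n+1]"
      proof -
        have a: "[j-1..<n+1] = (j-1) # [Suc (j-1)..<n+1]" by (rule upt_conv_Cons) (use j in arith)
        have b: "Suc (j-1) = j" using 4 by arith
        have c: "[j..<n+1] = j # [Suc j..<n+1]" by (rule upt_conv_Cons) (use j in arith)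
        show ?thesis unfolding a b c by simp
      qed
      ultimately show ?thesis by (simp add: tw_def pre_def post_def)
    qed
    have s1: "EQ (g j # pre) (pre @ [g j])"
    proof (rule cox_comm_list[OF gj preS])
      show "\<forall>b\<in>set pre. b \<noteq> g j \<and> mm (g j) b = 2"
      proof
        fix b assume "b \<in> set pre"
        then obtain l where l: "b = g l" "i \<le> l" "l < j - 1" by (auto simp: pre_def)
        then show "b \<noteq> g j \<and> mm (g j) b = 2"
          using 4 j mm_gen[of j l] gen_inj[of l j] i by auto
      qed
    qed
    have s1': "EQ ((g j # pre) @ ([g (j-1), g j] @ post)) ((pre @ [g j]) @ ([g (j-1), g j] @ post))"
      by (rule cox_eq_right[OF s1]) (use gj gj1 postS in auto)
    have m3: "mm (g j) (g (j-1)) = 3" using mm_gen[of j "j-1"] j 4 i by auto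
    have b3: "EQ [g j, g (j-1), g j] [g (j-1), g j, g (j-1)]"
    proof (rule cox_br3[where m=mm, OF gj gj1 _ m3])
      have "1 \<le> j - 1" using 4 i by arith
      then show "g j \<noteq> g (j-1)" using gen_inj[of j "j-1"] j by fastforce
    qed
    have s2: "EQ (pre @ [g j, g (j-1), g j] @ post) (pre @ [g (j-1), g j, g (j-1)] @ post)"
      by (rule cox_eq_ctx[OF b3 preS postS])
    have s3: "EQ (g (j-1) # post) (post @ [g (j-1)])"
    proof (rule cox_comm_list[OF gj1 postS])
      show "\<forall>b\<in>set post. b \<noteq> g (j-1) \<and> mm (g (j-1)) b = 2"
      proof
        fix b assume "b \<in> set post"
        then obtain l where l: "b = g l" "j + 1 \<le> l" "l \<le> n" by (auto simp: post_def tw_def)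
        then show "b \<noteq> g (j-1) \<and> mm (g (j-1)) b = 2"
          using 4 j mm_gen[of "j-1" l] gen_inj[of l "j-1"] i by auto
      qed
    qed
    have s3': "EQ ((pre @ [g (j-1), g j]) @ (g (j-1) # post)) ((pre @ [g (j-1), g j]) @ (post @ [g (j-1)]))"
      by (rule cox_eq_left[OF s3]) (use preS gj gj1 in auto)
    have "EQ (g j # tw i) (tw i @ [g (j-1)])"
      using cox_eq.trans[OF s1'[simplified] cox_eq.trans[OF s2[simplified] s3'[simplified]]]
      unfolding split by simp
    moreover have "[g (j-1)] \<in> lists SP" using gen_SP[of "j-1"] j 4 i by auto
    ultimately show ?thesis using 4 by (intro bexI[of _ "[g (j-1)]"]) (auto simp: tau_def)
  qed
qed

end



definition pi :: "nat list \<Rightarrow> nat \<Rightarrow> nat" where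
  "pi h = foldr (\<lambda>j f. tau j \<circ> f) h id"

lemma pi_Nil[simp]: "pi [] = id" by (simp add: pi_def)
lemma pi_Cons[simp]: "pi (j # h) = tau j \<circ> pi h" by (simp add: pi_def)
lemma pi_append: "pi (a @ b) = pi a \<circ> pi b"
  by (induction a) auto

lemma tau_range: "1 \<le> j \<Longrightarrow> j \<le> N \<Longrightarrow> i \<in> {1..N+1} \<Longrightarrow> tau j i \<in> {1..N+1}"
  by (auto simp: tau_def)

lemma pi_range: "set h \<subseteq> {1..N} \<Longrightarrow> i \<in> {1..N+1} \<Longrightarrow> pi h i \<in> {1..N+1}"
  by (induction h) (auto simp: tau_def)

lemma transp_real: "1 \<le> a \<Longrightarrow> a < b \<Longrightarrow> b \<le> N + 1 \<Longrightarrow> \<exists>h. set h \<subseteq> {1..N} \<and> pi h = transpose a b"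
proof (induction "b - a" arbitrary: a)
  case 0 then show ?case by simp
next
  case (Suc d)
  show ?case
  proof (cases "b = a + 1")
    case True
    have "pi [a] = transpose a b"
      using True by (auto simp: fun_eq_iff tau_def transpose_def)
    then show ?thesis using Suc True by (intro exI[of _ "[a]"]) auto
  next
    case False
    have d: "d = b - (a+1)" using Suc.hyps(2) by arith
    have "1 \<le> a + 1" "a + 1 < b" "b \<le> N + 1" using False Suc.prems by auto
    then obtain h where h: "set h \<subseteq> {1..N}" "pi h = transpose (a+1) b"
      using Suc.hyps(1)[OF d] by blast
    have "pi ([a] @ h @ [a]) = transpose a b"
      using False Suc.prems unfolding pi_append h(2)
      by (auto simp: fun_eq_iff tau_def transpose_def)
    then show ?thesis using h Suc.prems by (intro exI[of _ "[a] @ h @ [a]"]) auto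
  qed
qed

lemma transp_real': "a \<in> {1..N+1} \<Longrightarrow> b \<in> {1..N+1} \<Longrightarrow> \<exists>h. set h \<subseteq> {1..N} \<and> pi h = transpose a b"
proof -
  assume a: "a \<in> {1..N+1}" and b: "b \<in> {1..N+1}"
  consider "a = b" | "a < b" | "b < a" by linarith
  then show ?thesis
  proof cases
    case 1 then show ?thesis by (intro exI[of _ "[]"]) auto
  next
    case 2 then show ?thesis using transp_real[of a b N] a b by auto
  next
    case 3 then show ?thesis using transp_real[of b a N] a b by (auto simp: transpose_commute)
  qed
qed

lemma realize: assumes "p permutes {1..N+1}" shows "\<exists>h. set h \<subseteq> {1..N} \<and> pi h = p"
  using assms finite_atLeastAtMost
proof (induction rule: permutes_induct)
  case id then show ?case by (intro exI[of _ "[]"]) auto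
next
  case (swap a b p)
  obtain h1 where h1: "set h1 \<subseteq> {1..N}" "pi h1 = transpose a b" using transp_real' swap by blast
  obtain h2 where h2: "set h2 \<subseteq> {1..N}" "pi h2 = p" using swap by blast
  show ?case using h1 h2 by (intro exI[of _ "h1 @ h2"]) (auto simp: pi_append)
qed

context cox
begin

definition vert :: "('a + nat) list \<Rightarrow> nat \<Rightarrow> ('a + nat) list set set" where
  "vert c i = cs (c @ tw i)"

lemma vert_step: assumes "c \<in> lists SS" "1 \<le> j" "j \<le> n" "1 \<le> i" "i \<le> n + 1"
  shows "cs (c @ g j # tw i) = vert c (tau j i)"
proof -
  obtain u where u: "u \<in> lists SP" "EQ (g j # tw i) (tw (tau j i) @ u)" using K assms(2-5) by blast
  have "EQ (c @ (g j # tw i)) (c @ (tw (tau j i) @ u))" using cox_eq_left[OF u(2) assms(1)] .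
  then have "EQ (c @ g j # tw i) ((c @ tw (tau j i)) @ u)" by simp
  then show ?thesis unfolding vert_def using coset_eqI u(1) by blast
qed

lemma vert_pi: "set h \<subseteq> {1..n} \<Longrightarrow> c \<in> lists SS \<Longrightarrow> i \<in> {1..n+1} \<Longrightarrow> vert (c @ map g h) i = vert c (pi h i)"
proof (induction h arbitrary: c)
  case Nil then show ?case by simp
next
  case (Cons j h)
  have cj: "c @ [g j] \<in> lists SS" using Cons.prems gen_SS by auto
  have "vert (c @ map g (j # h)) i = vert ((c @ [g j]) @ map g h) i" by simp
  also have "\<dots> = vert (c @ [g j]) (pi h i)" using Cons.IH[of "c @ [g j]"] Cons.prems cj by simp
  also have "\<dots> = cs (c @ g j # tw (pi h i))" by (simp add: vert_def)
  also have "\<dots> = vert c (tau j (pi h i))"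
    using vert_step[OF Cons.prems(2), of j "pi h i"] Cons.prems pi_range[of h n i] by auto
  finally show ?case by simp
qed

lemma vert_EQ: "EQ c c' \<Longrightarrow> 1 \<le> i \<Longrightarrow> vert c i = vert c' i"
  unfolding vert_def using coset_EQ cox_eq_right tw_SS by blast

lemma vert_act: "h \<in> lists SS \<Longrightarrow> c \<in> lists SS \<Longrightarrow> 1 \<le> i \<Longrightarrow> act_vert V s1 M n h (vert c i) = vert (h @ c) i"
  unfolding vert_def using act_vert_coset tw_SS by simp

lemma coset_gn: "1 \<le> n \<Longrightarrow> cs [g n] \<noteq> cs []"
proof
  assume n: "1 \<le> n" and e: "cs [g n] = cs []"
  have "cl ([g n] @ []) \<in> cs [g n]" unfolding coset_def by blast
  then have "cl [g n] \<in> cs []" using e by simp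
  then obtain w where w: "w \<in> lists SP" "cl [g n] = cl ([] @ w)" unfolding coset_def by blast
  have "EQ w [g n]" using cls_mem[of "[g n]" "[] @ w"] w gen_SS n by simp
  then show False using not_sn_SP[OF n w(1)] cox_eq.sym by blast
qed

lemma vert_inj: assumes c: "c \<in> lists SS" shows "inj_on (vert c) {1..n+1}"
proof
  fix a b assume a: "a \<in> {1..n+1}" and b: "b \<in> {1..n+1}" and e: "vert c a = vert c b"
  show "a = b"
  proof (rule ccontr)
    assume ab: "a \<noteq> b"
    then have n: "1 \<le> n" using a b by auto
    define a' where "a' = transpose b (n+1) a"
    define p where "p = transpose b (n+1) \<circ> transpose a' n"
    have a'r: "a' \<in> {1..n+1}" using a b by (auto simp: a'_def transpose_def)
    have a'n: "a' \<noteq> n + 1" using ab a by (auto simp: a'_def transpose_def)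
    have "p permutes {1..n+1}" unfolding p_def
      by (rule permutes_compose) (use a'r b n in \<open>auto intro!: permutes_swap_id\<close>)
    then obtain h where h: "set h \<subseteq> {1..n}" "pi h = p" using realize by blast
    have pn: "p n = a" by (simp add: p_def a'_def)
    have pn1: "p (n+1) = b" using a'n by (simp add: p_def)
    define c' where "c' = c @ map g h"
    have "\<forall>x\<in>set h. 1 \<le> x \<and> x \<le> n" using h(1) by auto
    then have c': "c' \<in> lists SS" using c gen_SS by (auto simp: c'_def)
    have "vert c' n = vert c' (n+1)"
      using vert_pi[OF h(1) c, of n] vert_pi[OF h(1) c, of "n+1"] n e pn pn1 h(2) by (simp add: c'_def)
    then have "cs (c' @ [g n]) = cs c'"
      using tw_Cons[of n] by (simp add: vert_def tw_def)
    then have "act_vert V s1 M n (rev c') (cs (c' @ [g n])) = act_vert V s1 M n (rev c') (cs c')" by simp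
    moreover have rc: "rev c' \<in> lists SS" using c' by (simp add: lists_eq_set)
    moreover have "c' @ [g n] \<in> lists SS" using c' gen_SS[of n] n by simp
    ultimately have "cs (rev c' @ c' @ [g n]) = cs (rev c' @ c')"
      using act_vert_coset[OF rc] c' by simp
    moreover have "cs (rev c' @ c' @ [g n]) = cs [g n]"
      using coset_EQ[OF cox_eq_right[OF conjunct1[OF cox_inv[OF c']]]] gen_SS[of n] n by simp
    moreover have "cs (rev c' @ c') = cs []"
      using coset_EQ[OF conjunct1[OF cox_inv[OF c']]] by simp
    ultimately show False using coset_gn[OF n] by simp
  qed
qed

end



lemma chain_Union_mem: "finite F \<Longrightarrow> F \<noteq> {} \<Longrightarrow> (\<forall>A\<in>F. \<forall>B\<in>F. A \<subseteq> B \<or> B \<subseteq> A) \<Longrightarrow> \<Union>F \<in> F"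
proof (induction F rule: finite_ne_induct)
  case (singleton x) then show ?case by simp
next
  case (insert A F)
  then have U: "\<Union>F \<in> F" by blast
  then have "A \<subseteq> \<Union>F \<or> \<Union>F \<subseteq> A" using insert.prems by blast
  then show ?case
  proof
    assume "A \<subseteq> \<Union>F" then have "\<Union>(insert A F) = \<Union>F" by auto
    then show ?thesis using U by simp
  next
    assume "\<Union>F \<subseteq> A" then have "\<Union>(insert A F) = A" by auto
    then show ?thesis by simp
  qed
qed

lemma flag:
  assumes "finite X" "\<A> \<subseteq> Pow X" "{} \<notin> \<A>" "\<forall>A\<in>\<A>. \<forall>B\<in>\<A>. A \<subseteq> B \<or> B \<subseteq> A"
  shows "\<exists>L. distinct L \<and> set L = X \<and> (\<forall>A\<in>\<A>. A = set (drop (card X - card A) L))"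
  using assms
proof (induction X arbitrary: \<A> rule: finite_psubset_induct)
  case (psubset X)
  show ?case
  proof (cases "X = {}")
    case True
    then have "\<A> = {}" using psubset.prems by auto
    then show ?thesis using True by (intro exI[of _ "[]"]) auto
  next
    case False
    define \<A>' where "\<A>' = \<A> - {X}"
    have fin': "finite \<A>'" using psubset.hyps(1) psubset.prems(1) unfolding \<A>'_def
      by (meson finite_Diff finite_Pow_iff finite_subset)
    have "\<Union>\<A>' \<subset> X"
    proof (cases "\<A>' = {}")
      case True then show ?thesis using False by auto
    next
      case ne: False
      have "\<Union>\<A>' \<in> \<A>'" by (rule chain_Union_mem[OF fin' ne]) (use psubset.prems in \<open>auto simp: \<A>'_def\<close>)
      then show ?thesis using psubset.prems(1) unfolding \<A>'_def by auto
    qed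
    then obtain x where x: "x \<in> X" "x \<notin> \<Union>\<A>'" by blast
    define X' where "X' = X - {x}"
    have X'X: "X' \<subset> X" using x by (auto simp: X'_def)
    have "\<A>' \<subseteq> Pow X'" using x psubset.prems(1) by (auto simp: \<A>'_def X'_def)
    then obtain L' where L': "distinct L'" "set L' = X'" "\<forall>A\<in>\<A>'. A = set (drop (card X' - card A) L')"
      using psubset.IH[OF X'X, of \<A>'] psubset.prems by (auto simp: \<A>'_def)
    have "card X > 0" using x psubset.hyps(1) card_gt_0_iff by blast
    then have cX: "card X = card X' + 1" using x psubset.hyps(1) by (simp add: X'_def)
    have finX': "finite X'" using X'X psubset.hyps(1) finite_subset by auto
    show ?thesis
    proof (intro exI[of _ "x # L'"] conjI ballI)
      show "distinct (x # L')" using L' by (simp add: X'_def)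
      show "set (x # L') = X" using L' x by (auto simp: X'_def)
    next
      fix A assume A: "A \<in> \<A>"
      show "A = set (drop (card X - card A) (x # L'))"
      proof (cases "A = X")
        case True then show ?thesis using L' x by (auto simp: X'_def)
      next
        case False
        then have A': "A \<in> \<A>'" using A by (simp add: \<A>'_def)
        then have "A \<subseteq> X'" using \<open>\<A>' \<subseteq> Pow X'\<close> by auto
        then have "card A \<le> card X'" using finX' card_mono by blast
        then have "card X - card A = Suc (card X' - card A)" using cX by simp
        then show ?thesis using L'(3) A' by simp
      qed
    qed
  qed
qed

lemma set_drop_nth: "set (drop d L) = (\<lambda>j. L ! j) ` {d..<length L}"
proof -
  have "set (drop d L) = (\<lambda>i. drop d L ! i) ` {0..<length L - d}"
    by (metis atLeast0LessThan length_drop list.set_map map_nth set_upt)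
  also have "\<dots> = (\<lambda>j. L ! j) ` ((\<lambda>i. i + d) ` {0..<length L - d})"
    unfolding image_image by (rule image_cong[OF HOL.refl]) (simp add: nth_drop add.commute)
  also have "(\<lambda>i. i + d) ` {0..<length L - d} = {d..<length L}"
  proof -
    have "(\<lambda>i. i + d) ` {0..<length L - d} = {0 + d..<length L - d + d}" by (simp only: image_add_atLeastLessThan')
    then show ?thesis by auto
  qed
  finally show ?thesis .
qed




context cox
begin

abbreviation "csx \<equiv> csimplex V s1 M n"
abbreviation "CN \<equiv> Cn V s1 M n"

definition Std :: "('a + nat) list \<Rightarrow> ('a + nat) list set set set set" where
  "Std c = csx c ` {..n}"

lemma csimplex_vert: "csx c k = vert c ` {n-k+1..n+1}"
proof -
  have e: "cs (c @ map g [i..<n+1]) = vert c i" for i by (simp add: vert_def tw_def)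
  show ?thesis unfolding csimplex_def e by auto
qed

lemma csx_nonempty: "vert c (n+1) \<in> csx c k"
  unfolding csimplex_vert by auto

lemma CN_cases: "C \<in> CN \<Longrightarrow> \<exists>c k. c \<in> lists SS \<and> k \<le> n \<and> C = csx c k"
  unfolding Cn_def by blast

lemma main_lemma: assumes F: "F \<in> sd CN" shows "\<exists>c'\<in>lists SS. F \<subseteq> Std c'"
proof -
  have Fne: "F \<noteq> {}" and Ffin: "finite F" and FC: "F \<subseteq> CN"
    and Fch: "\<forall>A\<in>F. \<forall>B\<in>F. A \<subseteq> B \<or> B \<subseteq> A" using F by (auto simp: sd_def)
  have "\<Union>F \<in> F" using chain_Union_mem[OF Ffin Fne Fch] .
  then obtain c k where c: "c \<in> lists SS" "k \<le> n" "\<Union>F = csx c k" using CN_cases FC by blast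
  define X0 where "X0 = vert c ` {1..n+1}"
  have CX: "C \<subseteq> X0" if "C \<in> F" for C
  proof -
    have "C \<subseteq> csx c k" using that c(3) by auto
    also have "\<dots> \<subseteq> X0" unfolding csimplex_vert X0_def by auto
    finally show ?thesis .
  qed
  have Cne: "C \<noteq> {}" if "C \<in> F" for C
    using CN_cases[of C] FC that csx_nonempty by blast
  define Aof where "Aof C = {i\<in>{1..n+1}. vert c i \<in> C}" for C
  have CA: "C = vert c ` Aof C" if "C \<in> F" for C
    using CX[OF that] by (auto simp: Aof_def X0_def)
  define \<A> where "\<A> = Aof ` F"
  have "\<exists>L. distinct L \<and> set L = {1..n+1} \<and> (\<forall>A\<in>\<A>. A = set (drop (card {1..n+1} - card A) L))"
  proof (rule flag)
    show "\<A> \<subseteq> Pow {1..n+1}" by (auto simp: \<A>_def Aof_def)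
    show "{} \<notin> \<A>"
    proof
      assume "{} \<in> \<A>"
      then obtain C where C: "C \<in> F" "Aof C = {}" by (auto simp: \<A>_def)
      then have "C = {}" using CA[OF C(1)] by simp
      then show False using Cne[OF C(1)] by simp
    qed
    show "\<forall>A\<in>\<A>. \<forall>B\<in>\<A>. A \<subseteq> B \<or> B \<subseteq> A"
      using Fch unfolding \<A>_def Aof_def by blast
  qed simp
  then obtain L where L: "distinct L" "set L = {1..n+1}" "\<forall>A\<in>\<A>. A = set (drop (n + 1 - card A) L)"
    by auto
  have lenL: "length L = n + 1" using L(1,2) distinct_card by fastforce
  define p where "p i = (if i \<in> {1..n+1} then L ! (i - 1) else i)" for i
  have pimg: "p ` {a..n+1} = (\<lambda>j. L ! j) ` {a-1..<n+1}" if "1 \<le> a" for a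
  proof -
    have eq: "{a..n+1} = Suc ` {a-1..<n+1}" using that
      by (metis Suc_diff_le Suc_eq_plus1 atLeastLessThanSuc_atLeastAtMost diff_Suc_1 image_Suc_atLeastLessThan le_add_diff_inverse2 ordered_cancel_comm_monoid_diff_class.diff_add)
    have "p ` {a..n+1} = (p \<circ> Suc) ` {a-1..<n+1}" unfolding eq image_comp by (rule HOL.refl)
    also have "\<dots> = (\<lambda>j. L ! j) ` {a-1..<n+1}"
      by (rule image_cong[OF HOL.refl]) (auto simp: p_def)
    finally show ?thesis .
  qed
  have pperm: "p permutes {1..n+1}"
  proof (rule bij_imp_permutes)
    show "bij_betw p {1..n+1} {1..n+1}"
    proof (rule bij_betw_imageI)
      show "inj_on p {1..n+1}"
      proof
        fix a b assume ab: "a \<in> {1..n+1}" "b \<in> {1..n+1}" "p a = p b"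
        then have "L ! (a-1) = L ! (b-1)" by (simp add: p_def)
        then have "a - 1 = b - 1" using L(1) lenL ab(1,2) nth_eq_iff_index_eq by fastforce
        then show "a = b" using ab(1,2) by auto
      qed
      show "p ` {1..n+1} = {1..n+1}"
        using pimg[of 1] L(2) lenL set_drop_nth[of 0 L] by simp
    qed
  qed (auto simp: p_def)
  obtain h where h: "set h \<subseteq> {1..n}" "pi h = p" using realize[OF pperm] by blast
  define c' where "c' = c @ map g h"
  have "\<forall>x\<in>set h. 1 \<le> x \<and> x \<le> n" using h(1) by auto
  then have c': "c' \<in> lists SS" using c gen_SS by (auto simp: c'_def)
  have "F \<subseteq> Std c'"
  proof
    fix C assume C: "C \<in> F"
    define A where "A = Aof C"
    have AA: "A \<in> \<A>" using C by (simp add: A_def \<A>_def)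
    have Ane: "A \<noteq> {}" using Cne[OF C] CA[OF C] by (auto simp: A_def)
    have Asub: "A \<subseteq> {1..n+1}" by (auto simp: A_def Aof_def)
    have "card A \<le> n + 1" using card_mono[OF _ Asub] by simp
    moreover have "card A \<ge> 1" using Ane Asub by (meson card_0_eq finite_atLeastAtMost finite_subset less_one not_le)
    ultimately obtain m where m: "card A = m + 1" "m \<le> n" by (metis add.commute le_add_diff_inverse add_le_cancel_left)
    have "csx c' m = vert c' ` {n-m+1..n+1}" by (rule csimplex_vert)
    also have "\<dots> = (\<lambda>i. vert c (p i)) ` {n-m+1..n+1}"
      by (rule image_cong[OF HOL.refl]) (use vert_pi[OF h(1) c(1)] h(2) in \<open>auto simp: c'_def\<close>)
    also have "\<dots> = vert c ` (p ` {n-m+1..n+1})" by (simp add: image_image)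
    also have "p ` {n-m+1..n+1} = (\<lambda>j. L ! j) ` {n-m..<n+1}" using pimg[of "n-m+1"] by simp
    also have "\<dots> = set (drop (n - m) L)" using set_drop_nth[of "n-m" L] lenL by simp
    also have "\<dots> = A"
    proof -
      have e: "A = set (drop (n + 1 - card A) L)" using L(3) AA by blast
      show ?thesis using e m(1) by simp
    qed
    finally have "csx c' m = C" using CA[OF C] by (simp add: A_def)
    then show "C \<in> Std c'" using m(2) by (auto simp: Std_def)
  qed
  then show ?thesis using c' by blast
qed

lemma Std_card_le: "card (Std c) \<le> n + 1"
  unfolding Std_def using card_image_le[of "{..n}" "csx c"] by simp

lemma Std_sd: assumes c: "c \<in> lists SS" shows "Std c \<in> sd CN"
proof -
  have mono: "csx c k \<subseteq> csx c k'" if "k \<le> k'" for k k'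
    unfolding csimplex_vert using that by (intro image_mono) auto
  show ?thesis
    unfolding sd_def Std_def Cn_def
  proof (intro CollectI conjI)
    show "\<forall>A\<in>csx c ` {..n}. \<forall>B\<in>csx c ` {..n}. A \<subseteq> B \<or> B \<subseteq> A"
    proof (intro ballI)
      fix A B assume "A \<in> csx c ` {..n}" "B \<in> csx c ` {..n}"
      then obtain a b where ab: "A = csx c a" "B = csx c b" by auto
      show "A \<subseteq> B \<or> B \<subseteq> A"
      proof (cases "a \<le> b")
        case True then show ?thesis using mono[of a b] ab by simp
      next
        case False then show ?thesis using mono[of b a] ab by simp
      qed
    qed
  qed (use c in auto)
qed

lemma Std_card: assumes c: "c \<in> lists SS" shows "card (Std c) = n + 1"
proof -
  have cc: "card (csx c k) = k + 1" if "k \<le> n" for k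
  proof -
    have "card (csx c k) = card {n-k+1..n+1}"
      unfolding csimplex_vert
      by (rule card_image) (rule inj_on_subset[OF vert_inj[OF c]], auto)
    then show ?thesis using that by simp
  qed
  have "inj_on (csx c) {..n}"
  proof
    fix a b assume ab: "a \<in> {..n}" "b \<in> {..n}" "csx c a = csx c b"
    then have "card (csx c a) = card (csx c b)" by simp
    then have "a + 1 = b + 1" using cc[of a] cc[of b] ab(1,2) by simp
    then show "a = b" by simp
  qed
  then show ?thesis unfolding Std_def by (simp add: card_image)
qed

lemma Std_EQ: assumes "EQ c c'" shows "Std c = Std c'"
proof -
  have "csx c k = csx c' k" for k
    unfolding csimplex_vert by (rule image_cong[OF HOL.refl]) (use vert_EQ[OF assms] in auto)
  then show ?thesis by (simp add: Std_def)
qed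

lemma Std_act: assumes "h \<in> lists SS" "c \<in> lists SS" shows "act_sd V s1 M n h (Std c) = Std (h @ c)"
proof -
  have "act_vert V s1 M n h ` csx c k = csx (h @ c) k" for k
    unfolding csimplex_vert image_image by (rule image_cong[OF HOL.refl]) (use vert_act[OF assms] in auto)
  then show ?thesis unfolding act_sd_def Std_def image_image by simp
qed

lemma Std_eq: assumes "F \<in> sd CN" "card F = n + 1" shows "\<exists>c\<in>lists SS. F = Std c"
proof -
  obtain c where c: "c \<in> lists SS" "F \<subseteq> Std c" using main_lemma[OF assms(1)] by blast
  have fin: "finite (Std c)" by (simp add: Std_def)
  have "card F \<le> card (Std c)" using card_mono[OF fin c(2)] .
  then have "card F = card (Std c)" using Std_card_le[of c] assms(2) by simp
  then have "F = Std c" using card_subset_eq[OF fin c(2)] by simp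
  then show ?thesis using c by blast
qed

lemma main:
  "(\<forall>F1 \<in> sd CN. \<forall>F2 \<in> sd CN.
            card F1 = n + 1 \<longrightarrow> card F2 = n + 1 \<longrightarrow>
            (\<exists>h \<in> lists SS. act_sd V s1 M n h F1 = F2))
       \<and> (\<forall>F \<in> sd CN. \<exists>G \<in> sd CN. card G = n + 1 \<and> F \<subseteq> G)"
proof (intro conjI ballI impI)
  fix F1 F2 assume F: "F1 \<in> sd CN" "F2 \<in> sd CN" "card F1 = n + 1" "card F2 = n + 1"
  obtain c1 where c1: "c1 \<in> lists SS" "F1 = Std c1" using Std_eq F by blast
  obtain c2 where c2: "c2 \<in> lists SS" "F2 = Std c2" using Std_eq F by blast
  have rc1: "rev c1 \<in> lists SS" using c1 by (simp add: lists_eq_set)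
  define h where "h = c2 @ rev c1"
  have hS: "h \<in> lists SS" using c2 rc1 by (simp add: h_def)
  have "EQ (c2 @ (rev c1 @ c1)) (c2 @ [])"
    by (rule cox_eq_left[OF conjunct1[OF cox_inv[OF c1(1)]] c2(1)])
  then have "EQ (h @ c1) c2" by (simp add: h_def)
  then have "act_sd V s1 M n h F1 = F2"
    using Std_act[OF hS c1(1)] Std_EQ c1(2) c2(2) by simp
  then show "\<exists>h \<in> lists SS. act_sd V s1 M n h F1 = F2" using hS by blast
next
  fix F assume F: "F \<in> sd CN"
  obtain c where c: "c \<in> lists SS" "F \<subseteq> Std c" using main_lemma[OF F] by blast
  then show "\<exists>G \<in> sd CN. card G = n + 1 \<and> F \<subseteq> G" using Std_sd Std_card by blast
qed

end


theorem lemma6p2: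
  fixes V :: "'a set" and s1 :: 'a and M :: "'a \<Rightarrow> 'a \<Rightarrow> enat" and n :: nat
  assumes "coxeter_diagram V s1 M"
  shows "(\<forall>F1 \<in> sd (Cn V s1 M n). \<forall>F2 \<in> sd (Cn V s1 M n).
            card F1 = n + 1 \<longrightarrow> card F2 = n + 1 \<longrightarrow>
            (\<exists>g \<in> lists (Sgen V s1 M (int n)). act_sd V s1 M n g F1 = F2))
       \<and> (\<forall>F \<in> sd (Cn V s1 M n). \<exists>G \<in> sd (Cn V s1 M n). card G = n + 1 \<and> F \<subseteq> G)"
proof -
  interpret cox V s1 M n by (rule cox.intro) (rule assms)
  show ?thesis by (rule main)
qed

end
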